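(* There exists at most one family $(\phi_k)_{k\geq 0}$ of $\mathbb{Z}[q,q^{-1}]$-linear maps $\phi_k\colon H_k\to\mathbb{Q}(q)$ satisfying all of the following: (i) $\phi_k(xy)=\phi_k(yx)$ for all $k$ and all $x,y\in H_k$; (ii) $\phi_0(1)=1$ and $\phi_1(1)=1$; (iii) for every $k\geq 2$ and every word $w$ in $\tau_1,\dots,\tau_{k-1}$ such that some letter $\tau_i$ ($1\le i\le k-1$) does not occur in $w$, one has $\phi_k(\theta_w)=0$; (iv) for every $k\geq 2$ and every $x\in H_{k-1}\subset H_k$, one has $\phi_k(\theta_{k-1}x)=\phi_{k-1}(x)$.
   Context: For $n\geq 0$, the Hecke algebra $H_n$ is the unital $\mathbb{Z}[q,q^{-1}]$-algebra generated by $\theta_1,\dots,\theta_{n-1}$ (so $H_0=H_1=\mathbb{Z}[q,q^{-1}]$) subject to the relations $\theta_i^2=[2]\theta_i$ (with $[2]=q+q^{-1}$); $\theta_i\theta_j=\theta_j\theta_i$ for $|i-j|\geq 2$; and $\theta_i\theta_{i+1}\theta_i+\theta_{i+1}=\theta_{i+1}\theta_i\theta_{i+1}+\theta_i$ for $1\le i\le n-2$. For $n\geq2$, $H_{n-1}$ embeds in $H_n$ via $\theta_i\mapsto\theta_i$. Let $\tau_i=(i\ i+1)\in S_n$ and for a word $w=\tau_{i_1}\cdots\tau_{i_l}$ set $\theta_w=\theta_{i_1}\cdots\theta_{i_l}$. Graphically, $\theta_i$ is drawn as $n$ upward strands of label $1$ where strands $i,i+1$ merge into an edge of label $2$ (a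 ``dumble'') and split again; $\phi_k$ models a function on the closures of such diagrams in an annulus (vinyl graphs of level $k$), condition (iii) says $\phi$ vanishes on disconnected closures, and condition (iv) says closures related by removing an outer curl (an outer digon) have equal value. *)

theory Defs
  imports "HOL-Computational_Algebra.Polynomial" "HOL-Computational_Algebra.Fraction_Field"
begin

type_synonym ratfun = "rat poly fract"

definition qq :: ratfun where "qq = Fract [:0, 1:] 1"

definition qtwo :: ratfun where "qtwo = qq + inverse qq"

text \<open>A word tau_{i_1} ... tau_{i_l} in S_k is encoded as the list [i_1,...,i_l];
  it is a word in the generators of H_k iff all letters lie in {1,...,k-1}.\<close>
definition word_in :: "nat \<Rightarrow> nat list \<Rightarrow> bool" where
  "word_in k w \<longleftrightarrow> (\<forall>i\<in>set w. 1 \<le> i \<and> i < k)"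

text \<open>A Z[q,q^-1]-linear map phi: H_k \<rightarrow> Q(q) is the same as its values f w = phi(theta_w)
  on the spanning family theta_w, subject to the condition that the linear extension
  to the free algebra kills the two-sided ideal generated by the defining relations,
  i.e. f respects every relation inserted in every context u _ v.\<close>
definition hecke_functional :: "nat \<Rightarrow> (nat list \<Rightarrow> ratfun) \<Rightarrow> bool" where
  "hecke_functional k f \<longleftrightarrow>
     (\<forall>u v i. word_in k u \<and> word_in k v \<and> 1 \<le> i \<and> i < k \<longrightarrow>
        f (u @ [i, i] @ v) = qtwo * f (u @ [i] @ v)) \<and>
     (\<forall>u v i j. word_in k u \<and> word_in k v \<and> 1 \<le> i \<and> i < k \<and> 1 \<le> j \<and> j < k \<and>
        (i + 2 \<le> j \<or> j + 2 \<le> i) \<longrightarrow>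
        f (u @ [i, j] @ v) = f (u @ [j, i] @ v)) \<and>
     (\<forall>u v i. word_in k u \<and> word_in k v \<and> 1 \<le> i \<and> i + 1 < k \<longrightarrow>
        f (u @ [i, i + 1, i] @ v) + f (u @ [i + 1] @ v) =
        f (u @ [i + 1, i, i + 1] @ v) + f (u @ [i] @ v))"

text \<open>A family (phi_k) satisfying (i)-(iv); phi k w stands for phi_k(theta_w).
  By linearity, (i) and (iv) need only be checked on the spanning families.\<close>
definition good_family :: "(nat \<Rightarrow> nat list \<Rightarrow> ratfun) \<Rightarrow> bool" where
  "good_family \<phi> \<longleftrightarrow>
     (\<forall>k. hecke_functional k (\<phi> k)) \<and>
     \<comment> \<open>(i) trace property\<close>
     (\<forall>k u v. word_in k u \<and> word_in k v \<longrightarrow> \<phi> k (u @ v) = \<phi> k (v @ u)) \<and>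
     \<comment> \<open>(ii) normalisation\<close>
     \<phi> 0 [] = 1 \<and> \<phi> 1 [] = 1 \<and>
     \<comment> \<open>(iii) vanishing on words missing a generator\<close>
     (\<forall>k w. 2 \<le> k \<and> word_in k w \<and> (\<exists>i. 1 \<le> i \<and> i < k \<and> i \<notin> set w) \<longrightarrow> \<phi> k w = 0) \<and>
     \<comment> \<open>(iv) Markov-type condition\<close>
     (\<forall>k w. 2 \<le> k \<and> word_in (k - 1) w \<longrightarrow> \<phi> k ((k - 1) # w) = \<phi> (k - 1) w)"

end

theory Submission
  imports Defs
begin

lemma wi_simps [simp]:
  "word_in k []"
  "word_in k (x#w) = (1 \<le> x \<and> x < k \<and> word_in k w)"
  "word_in k (a@b) = (word_in k a \<and> word_in k b)"
  by (auto simp: word_in_def)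

lemma hf1: "hecke_functional k f \<Longrightarrow> word_in k u \<Longrightarrow> word_in k v \<Longrightarrow> 1 \<le> i \<Longrightarrow> i < k \<Longrightarrow>
  f (u @ [i, i] @ v) = qtwo * f (u @ [i] @ v)"
  unfolding hecke_functional_def by blast

lemma hf2: "hecke_functional k f \<Longrightarrow> word_in k u \<Longrightarrow> word_in k v \<Longrightarrow> 1 \<le> i \<Longrightarrow> i < k \<Longrightarrow>
  1 \<le> j \<Longrightarrow> j < k \<Longrightarrow> (i + 2 \<le> j \<or> j + 2 \<le> i) \<Longrightarrow>
  f (u @ [i, j] @ v) = f (u @ [j, i] @ v)"
  unfolding hecke_functional_def by blast

lemma hf3: "hecke_functional k f \<Longrightarrow> word_in k u \<Longrightarrow> word_in k v \<Longrightarrow> 1 \<le> i \<Longrightarrow> i + 1 < k \<Longrightarrow>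
  f (u @ [i, i + 1, i] @ v) + f (u @ [i + 1] @ v) = f (u @ [i + 1, i, i + 1] @ v) + f (u @ [i] @ v)"
  unfolding hecke_functional_def by blast

lemma wi_mono: "word_in k w \<Longrightarrow> k \<le> k' \<Longrightarrow> word_in k' w"
  by (auto simp: word_in_def)

lemma comm:
  assumes H: "hecke_functional k g" and "word_in k x" "word_in k y" "word_in k a"
    and "1 \<le> j" "j < k" "\<forall>i\<in>set a. i + 2 \<le> j"
  shows "g (x @ [j] @ a @ y) = g (x @ a @ [j] @ y)"
  using assms(2-7)
proof (induction a arbitrary: x)
  case Nil then show ?case by simp
next
  case (Cons b a)
  have r: "g (x @ [j, b] @ (a @ y)) = g (x @ [b, j] @ (a @ y))"
    using Cons.prems by (intro hf2[OF H]) auto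
  have "g ((x @ [b]) @ [j] @ a @ y) = g ((x @ [b]) @ a @ [j] @ y)"
    using Cons.prems by (intro Cons.IH) auto
  with r show ?case by simp
qed

abbreviation cnt :: "nat \<Rightarrow> nat list \<Rightarrow> nat" where
  "cnt j m \<equiv> length (filter ((=) j) m)"

lemma sm_lemma: "word_in (Suc j) x \<Longrightarrow> j \<notin> set x \<Longrightarrow> \<forall>i\<in>set x. i + 2 \<le> Suc j"
  unfolding word_in_def by (metis Suc_leI add_2_eq_Suc' le_neq_implies_less not_less_eq_eq)

lemma wi_drop: "word_in (Suc j) x \<Longrightarrow> j \<notin> set x \<Longrightarrow> word_in j x"
  unfolding word_in_def using less_Suc_eq by blast

lemma cnt0 [simp]: "j \<notin> set p \<Longrightarrow> filter ((=) j) p = []"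
  by (induct p) auto

lemma L:
  "hecke_functional (Suc j) g \<Longrightarrow>
   (\<forall>a. word_in (Suc j) a \<and> cnt j a \<le> 1 \<longrightarrow> g a = 0) \<Longrightarrow>
   word_in (Suc j) m \<Longrightarrow> g m = 0"
proof (induction j arbitrary: g m)
  case 0
  have "filter ((=) 0) m = []" using 0(3) unfolding word_in_def by (induction m) auto
  then have "cnt 0 m \<le> 1" by simp
  then show ?case using 0 by blast
next
  case (Suc j)
  define J where "J = Suc j"
  have H: "hecke_functional (Suc J) g" using Suc.prems J_def by simp
  have V: "\<And>a. word_in (Suc J) a \<Longrightarrow> cnt J a \<le> 1 \<Longrightarrow> g a = 0"
    using Suc.prems J_def by simp
  have "\<forall>m. word_in (Suc J) m \<longrightarrow> cnt J m = n \<longrightarrow> g m = 0" for n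
  proof (induction n rule: less_induct)
    case (less n)
    show ?case
    proof (intro allI impI)
      fix m assume wm: "word_in (Suc J) m" and cm: "cnt J m = n"
      show "g m = 0"
      proof (cases "n \<le> 1")
        case True then show ?thesis using V wm cm by auto
      next
        case False
        then have "J \<in> set m" using cm
          by (metis filter_False length_0_conv not_one_le_zero le_numeral_extra(4) zero_le)
        then obtain p r where m1: "m = p @ J # r" "J \<notin> set p" by (meson split_list_first)
        have "cnt J r = n - 1" using m1 cm
          by simp
        then have "J \<in> set r" using False
          by (metis One_nat_def diff_is_0_eq filter_False length_0_conv nat_le_linear)
        then obtain q s where r1: "r = q @ J # s" "J \<notin> set q" by (meson split_list_first)
        have m2: "m = p @ [J] @ q @ [J] @ s" using m1 r1 by simp
        have cntm: "n = cnt J p + cnt J s + 2" using m2 cm m1(2) r1(2)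
          by simp
        have wp: "word_in (Suc J) p" and wq: "word_in (Suc J) q" and ws: "word_in (Suc J) s"
          using wm m2 by auto
        have wqJ: "word_in J q" using wq r1(2) by (auto simp: word_in_def less_Suc_eq)
        have IHc: "g w = 0" if "word_in (Suc J) w" "cnt J w < n" for w
          using less.IH that by blast
        define h where "h x = g (p @ [J] @ x @ [J] @ s)" for x
        have Hh: "hecke_functional (Suc j) h"
          unfolding hecke_functional_def h_def J_def[symmetric]
        proof (intro conjI allI impI)
          fix u v i assume a: "word_in J u \<and> word_in J v \<and> 1 \<le> i \<and> i < J"
          have wu: "word_in (Suc J) (p @ [J] @ u)" and wv: "word_in (Suc J) (v @ [J] @ s)"
            using a wp ws J_def by (auto simp: word_in_def)
          have "g ((p @ [J] @ u) @ [i, i] @ (v @ [J] @ s)) = qtwo * g ((p @ [J] @ u) @ [i] @ (v @ [J] @ s))"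
            using a J_def by (intro hf1[OF H wu wv] hf2[OF H wu wv] hf3[OF H wu wv]) auto
          then show "g (p @ [J] @ (u @ [i, i] @ v) @ [J] @ s) = qtwo * g (p @ [J] @ (u @ [i] @ v) @ [J] @ s)"
            by simp
        next
          fix u v i j' assume a: "word_in J u \<and> word_in J v \<and> 1 \<le> i \<and> i < J \<and> 1 \<le> j' \<and> j' < J \<and> (i + 2 \<le> j' \<or> j' + 2 \<le> i)"
          have wu: "word_in (Suc J) (p @ [J] @ u)" and wv: "word_in (Suc J) (v @ [J] @ s)"
            using a wp ws J_def by (auto simp: word_in_def)
          have "g ((p @ [J] @ u) @ [i, j'] @ (v @ [J] @ s)) = g ((p @ [J] @ u) @ [j', i] @ (v @ [J] @ s))"
            using a J_def by (intro hf1[OF H wu wv] hf2[OF H wu wv] hf3[OF H wu wv]) auto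
          then show "g (p @ [J] @ (u @ [i, j'] @ v) @ [J] @ s) = g (p @ [J] @ (u @ [j', i] @ v) @ [J] @ s)"
            by simp
        next
          fix u v i assume a: "word_in J u \<and> word_in J v \<and> 1 \<le> i \<and> i + 1 < J"
          have wu: "word_in (Suc J) (p @ [J] @ u)" and wv: "word_in (Suc J) (v @ [J] @ s)"
            using a wp ws J_def by (auto simp: word_in_def)
          have "g ((p @ [J] @ u) @ [i, i + 1, i] @ (v @ [J] @ s)) + g ((p @ [J] @ u) @ [i + 1] @ (v @ [J] @ s)) =
                g ((p @ [J] @ u) @ [i + 1, i, i + 1] @ (v @ [J] @ s)) + g ((p @ [J] @ u) @ [i] @ (v @ [J] @ s))"
            using a J_def by (intro hf1[OF H wu wv] hf2[OF H wu wv] hf3[OF H wu wv]) auto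
          then show "g (p @ [J] @ (u @ [i, i + 1, i] @ v) @ [J] @ s) + g (p @ [J] @ (u @ [i + 1] @ v) @ [J] @ s) =
               g (p @ [J] @ (u @ [i + 1, i, i + 1] @ v) @ [J] @ s) + g (p @ [J] @ (u @ [i] @ v) @ [J] @ s)"
            by simp
        qed
        have Vh: "\<forall>a. word_in (Suc j) a \<and> cnt j a \<le> 1 \<longrightarrow> h a = 0"
        proof (intro allI impI)
          fix a assume "word_in (Suc j) a \<and> cnt j a \<le> 1"
          then have wa: "word_in J a" and ca: "cnt j a \<le> 1" using J_def by auto
          show "h a = 0"
          proof (cases "j \<in> set a")
            case False
            have sm: "\<forall>i\<in>set a. i + 2 \<le> J" using sm_lemma[of j a] wa False J_def by simp
            have wa': "word_in (Suc J) a" using wa wi_mono by simp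
            have ws': "word_in (Suc J) ([J] @ s)" using ws J_def by simp
            have "h a = g (p @ a @ [J] @ [J] @ s)"
              unfolding h_def using comm[OF H wp ws' wa' _ _ sm] J_def by simp
            also have "\<dots> = qtwo * g ((p @ a) @ [J] @ s)"
              using hf1[OF H _ ws, of "p @ a" J] wp wa' J_def by simp
            also have "g ((p @ a) @ [J] @ s) = 0"
            proof (rule IHc)
              show "word_in (Suc J) ((p @ a) @ [J] @ s)" using wp wa' ws J_def by simp
              have "J \<notin> set a" using wa by (auto simp: word_in_def)
              then show "cnt J ((p @ a) @ [J] @ s) < n" using cntm by simp
            qed
            finally show ?thesis by simp
          next
            case True
            then obtain b c where a1: "a = b @ j # c" "j \<notin> set b" by (meson split_list_first)
            have "j \<notin> set c"
            proof
              assume "j \<in> set c"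
              then have "cnt j c \<ge> 1" by (metis One_nat_def Suc_leI filter_empty_conv length_greater_0_conv)
              then show False using ca a1 by simp
            qed
            note jc = this
            have wbJ: "word_in J b" and wcJ: "word_in J c" and j1: "1 \<le> j"
              using wa a1 by auto
            have smb: "\<forall>i\<in>set b. i + 2 \<le> J" using sm_lemma[of j b] wbJ a1(2) J_def by simp
            have smc: "\<forall>i\<in>set c. i + 2 \<le> J" using sm_lemma[of j c] wcJ jc J_def by simp
            have wb: "word_in J b" and wc: "word_in J c" using wbJ wcJ .
            have wb': "word_in (Suc J) b" and wc': "word_in (Suc J) c" using wb wc wi_mono by auto
            have noJb: "J \<notin> set b" "J \<notin> set c" using wb wc by (auto simp: word_in_def)
            have J1: "1 \<le> J" "J < Suc J" "j + 1 = J" "j < Suc J" using J_def by auto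
            have y1: "word_in (Suc J) (j # c @ [J] @ s)" using wc' ws J_def j1 by simp
            have "h a = g (p @ b @ [J] @ (j # c @ [J] @ s))"
              unfolding h_def a1 using comm[OF H wp y1 wb' J1(1,2) smb] by simp
            also have "\<dots> = g ((p @ b @ [J, j]) @ [J] @ c @ s)"
              using comm[OF H _ ws wc' J1(1,2) smc, of "p @ b @ [J, j]"] wp wb' J1 j1 by simp
            also have "\<dots> = g ((p @ b) @ [J, j, J] @ (c @ s))" by simp
            also have "\<dots> = g ((p @ b) @ [j, j + 1, j] @ (c @ s)) + g ((p @ b) @ [j + 1] @ (c @ s))
                 - g ((p @ b) @ [j] @ (c @ s))"
            proof -
              have "g ((p @ b) @ [j, j + 1, j] @ (c @ s)) + g ((p @ b) @ [j + 1] @ (c @ s)) =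
                    g ((p @ b) @ [j + 1, j, j + 1] @ (c @ s)) + g ((p @ b) @ [j] @ (c @ s))"
                using hf3[OF H _ _ j1, of "p @ b" "c @ s"] wp wb' wc' ws J1 by simp
              then show ?thesis using J1(3) by (simp add: eq_diff_eq)
            qed
            also have "g ((p @ b) @ [j, j + 1, j] @ (c @ s)) = 0"
              by (rule IHc) (use wp wb' wc' ws j1 J1 cntm noJb in auto)
            also have "g ((p @ b) @ [j + 1] @ (c @ s)) = 0"
              by (rule IHc) (use wp wb' wc' ws j1 J1 cntm noJb in auto)
            also have "g ((p @ b) @ [j] @ (c @ s)) = 0"
              by (rule IHc) (use wp wb' wc' ws j1 J1 cntm noJb in auto)
            finally show ?thesis by simp
          qed
        qed
        have "h q = 0" using Suc.IH[OF Hh Vh] wqJ J_def by simp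
        then show "g m = 0" unfolding h_def m2 .
      qed
    qed
  qed
  then show ?case using Suc.prems J_def by auto
qed

lemma gf_hecke: "good_family f \<Longrightarrow> hecke_functional k (f k)"
  unfolding good_family_def by blast
lemma gf_trace: "good_family f \<Longrightarrow> word_in k u \<Longrightarrow> word_in k v \<Longrightarrow> f k (u @ v) = f k (v @ u)"
  unfolding good_family_def by blast
lemma gf_norm: "good_family f \<Longrightarrow> f 0 [] = 1 \<and> f 1 [] = 1"
  unfolding good_family_def by blast
lemma gf_van: "good_family f \<Longrightarrow> 2 \<le> k \<Longrightarrow> word_in k w \<Longrightarrow> 1 \<le> i \<Longrightarrow> i < k \<Longrightarrow> i \<notin> set w \<Longrightarrow> f k w = 0"
  unfolding good_family_def by blast
lemma gf_markov: "good_family f \<Longrightarrow> 2 \<le> k \<Longrightarrow> word_in (k - 1) w \<Longrightarrow> f k ((k - 1) # w) = f (k - 1) w"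
  unfolding good_family_def by blast

theorem mainTheorem3:
  fixes \<phi> \<psi> :: "nat \<Rightarrow> nat list \<Rightarrow> ratfun"
  assumes "good_family \<phi>" and "good_family \<psi>"
  shows "\<forall>k w. word_in k w \<longrightarrow> \<phi> k w = \<psi> k w"
proof -
  have "\<forall>w. word_in k w \<longrightarrow> \<phi> k w = \<psi> k w" for k
  proof (induction k rule: less_induct)
    case (less k)
    show ?case
    proof (cases "k < 2")
      case True
      show ?thesis
      proof (intro allI impI)
        fix w assume "word_in k w"
        then have "w = []" using True by (cases w) (auto simp: word_in_def)
        moreover have "k = 0 \<or> k = 1" using True by auto
        ultimately show "\<phi> k w = \<psi> k w" using gf_norm[OF assms(1)] gf_norm[OF assms(2)] by auto
      qed
    next
      case False
      then obtain n where kn0: "k = Suc n" by (cases k) auto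
      with False have kn: "k = Suc n" "1 \<le> n" by auto
      define d where "d w = \<phi> k w - \<psi> k w" for w
      have Hp: "hecke_functional k (\<phi> k)" and Hq: "hecke_functional k (\<psi> k)"
        using gf_hecke assms by auto
      have Hd: "hecke_functional (Suc n) d"
        unfolding hecke_functional_def kn(1)[symmetric]
      proof (intro conjI allI impI)
        fix u v i assume a: "word_in k u \<and> word_in k v \<and> 1 \<le> i \<and> i < k"
        then show "d (u @ [i, i] @ v) = qtwo * d (u @ [i] @ v)"
          unfolding d_def using hf1[OF Hp, of u v i] hf1[OF Hq, of u v i] by (simp add: right_diff_distrib)
      next
        fix u v i j assume a: "word_in k u \<and> word_in k v \<and> 1 \<le> i \<and> i < k \<and> 1 \<le> j \<and> j < k \<and> (i + 2 \<le> j \<or> j + 2 \<le> i)"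
        then show "d (u @ [i, j] @ v) = d (u @ [j, i] @ v)"
          unfolding d_def using hf2[OF Hp, of u v i j] hf2[OF Hq, of u v i j] by simp
      next
        fix u v i assume a: "word_in k u \<and> word_in k v \<and> 1 \<le> i \<and> i + 1 < k"
        then have e1: "\<phi> k (u @ [i, i + 1, i] @ v) + \<phi> k (u @ [i + 1] @ v) = \<phi> k (u @ [i + 1, i, i + 1] @ v) + \<phi> k (u @ [i] @ v)"
          and e2: "\<psi> k (u @ [i, i + 1, i] @ v) + \<psi> k (u @ [i + 1] @ v) = \<psi> k (u @ [i + 1, i, i + 1] @ v) + \<psi> k (u @ [i] @ v)"
          using hf3[OF Hp, of u v i] hf3[OF Hq, of u v i] by auto
        have ar: "\<And>a b c e a' b' c' e' :: ratfun. a + b = c + e \<Longrightarrow> a' + b' = c' + e' \<Longrightarrow>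
              (a - a') + (b - b') = (c - c') + (e - e')"
          by (metis add_diff_add)
        show "d (u @ [i, i + 1, i] @ v) + d (u @ [i + 1] @ v) = d (u @ [i + 1, i, i + 1] @ v) + d (u @ [i] @ v)"
          unfolding d_def by (rule ar[OF e1 e2])
      qed
      have Vd: "\<forall>a. word_in (Suc n) a \<and> cnt n a \<le> 1 \<longrightarrow> d a = 0"
      proof (intro allI impI)
        fix a assume "word_in (Suc n) a \<and> cnt n a \<le> 1"
        then have wa: "word_in k a" and ca: "cnt n a \<le> 1" using kn by auto
        show "d a = 0"
        proof (cases "n \<in> set a")
          case False
          have k2: "2 \<le> k" using kn by simp
          show ?thesis unfolding d_def
            using gf_van[OF assms(1) k2 wa _ _ False] gf_van[OF assms(2) k2 wa _ _ False] kn by simp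
        next
          case True
          then obtain u v where a1: "a = u @ n # v" "n \<notin> set u" by (meson split_list_first)
          have "n \<notin> set v"
          proof
            assume "n \<in> set v"
            then have "cnt n v \<ge> 1" by (metis One_nat_def Suc_leI filter_empty_conv length_greater_0_conv)
            then show False using ca a1 by simp
          qed
          with a1 wa kn have wu: "word_in n u" and wv: "word_in n v"
            by (auto simp: word_in_def less_Suc_eq)
          have k2: "2 \<le> k" using kn by simp
          have wu': "word_in k u" and wnv: "word_in k (n # v)" using wa a1 by auto
          have wvu: "word_in (k - 1) (v @ u)" using wu wv kn by simp
          have "\<phi> k a = \<phi> k ((n # v) @ u)" using gf_trace[OF assms(1) wu' wnv] a1 by simp
          also have "\<dots> = \<phi> n (v @ u)" using gf_markov[OF assms(1) k2 wvu] kn by simp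
          also have "\<dots> = \<psi> n (v @ u)" using less.IH kn wu wv by simp
          also have "\<dots> = \<psi> k ((n # v) @ u)" using gf_markov[OF assms(2) k2 wvu] kn by simp
          also have "\<dots> = \<psi> k a" using gf_trace[OF assms(2) wu' wnv] a1 by simp
          finally show ?thesis unfolding d_def by simp
        qed
      qed
      show ?thesis using L[OF Hd Vd] kn unfolding d_def by auto
    qed
  qed
  then show ?thesis by blast
qed

end
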